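(* In the setting described in the context, for all $0\le i,j\le\textsc{m}$, $$\sum_{k=0}^{\textsc{m}}f_k(\textsc{e}_i)f_k(\textsc{e}_j)\Delta_k=\begin{cases}N_j&i=j,\\0&i\ne j,\end{cases}$$ where $\Delta_k=\prod_{1\le l\le k}\frac{\tilde a_{\textsc{m}+1-l}}{a_l}$ and $$N_j=\frac{1}{|\epsilon_j|\,a_1\cdots a_{\textsc{m}}}\prod_{\substack{0\le l\le\textsc{m}\\ l\ne j}}|\textsc{e}_j-\textsc{e}_l|=\frac{1}{|\epsilon_j|}\prod_{\substack{1\le k\le\textsc{m}\\1\le r\le4}}\frac{[u_1+k]_r\,[u_1-\frac12+k]_r}{[u_1-u_r+k]_r\,[u_1-v_r-\frac12+k]_r}\prod_{\substack{0\le l\le\textsc{m}\\ l\ne j}}|\textsc{e}_j-\textsc{e}_l|,$$ with $\epsilon_j=\tilde p_{\textsc{m}}(\textsc{e}_j)/(a_1\cdots a_{\textsc{m}})$.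
   Context: Fix $0<p<1$ and the Jacobi theta functions $\theta_1(z)=2p^{1/4}\sin z\prod_{n\ge1}(1-p^{2n})(1-2p^{2n}\cos 2z+p^{4n})$, $\theta_2(z)=2p^{1/4}\cos z\prod_{n\ge1}(1-p^{2n})(1+2p^{2n}\cos 2z+p^{4n})$, $\theta_3(z)=\prod_{n\ge1}(1-p^{2n})(1+2p^{2n-1}\cos 2z+p^{4n-2})$, $\theta_4(z)=\prod_{n\ge1}(1-p^{2n})(1-2p^{2n-1}\cos 2z+p^{4n-2})$. For $\alpha>0$ set $[z]_1=\theta_1(\frac{\alpha}{2}z)/(\frac{\alpha}{2}\theta_1'(0))$, $[z]_r=\theta_r(\frac{\alpha}{2}z)/\theta_r(0)$ ($r=2,3,4$). Parameters: real $u_1,\dots,u_4,v_1,\dots,v_4$ with $u_r>0$, $|v_r|<u_r+\frac12$ for $r=1,2$; $\textsc{m}\in\mathbb{N}$; $\alpha=\pi/(u_1+u_2+\textsc{m})$; a real $u$ with $u,u+1\notin\frac{2\pi}{\alpha}\mathbb{Z}$. Let $\pi_1=\mathrm{id}$, $\pi_2=(12)(34)$, $\pi_3=(13)(24)$, $\pi_4=(14)(23)$ in $S_4$, and $c_r=\frac{2}{[u]_1[u+1]_1}\prod_{s=1}^4[u_{\pi_r(s)}-\frac12]_s[v_{\pi_r(s)}]_s$. For integers $k$ define $a_k=\prod_{r=1}^4\frac{[u_1-u_r+k]_r[u_1-v_r-\frac12+k]_r}{[u_1+k]_r[u_1-\frac12+k]_r}$, $\tilde a_k=\prod_{r=1}^4\frac{[u_2-u_{\pi_2(r)}+k]_r[u_2-v_{\pi_2(r)}-\frac12+k]_r}{[u_2+k]_r[u_2-\frac12+k]_r}$,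 $b_k=\sum_{r=1}^4c_r\frac{[u_1+k+\frac12+u]_r[u_1+k-\frac12-u]_r}{[u_1+k+\frac12]_r[u_1+k-\frac12]_r}$ (the numbers $a_k,\tilde a_k$, $1\le k\le\textsc{m}$, are positive). Let $\mathbf H$ be the $(\textsc{m}+1)\times(\textsc{m}+1)$ tridiagonal matrix with rows/columns indexed by $0,\dots,\textsc{m}$, $H_{k,k}=b_k$, $H_{k,k-1}=a_k$ ($1\le k\le\textsc{m}$), $H_{k,k+1}=\tilde a_{\textsc{m}-k}$ ($0\le k\le\textsc{m}-1$), all other entries $0$; its eigenvalues are real and simple, denoted $\textsc{e}_0>\textsc{e}_1>\cdots>\textsc{e}_{\textsc{m}}$. The monic elliptic Racah polynomials are $p_0(\textsc{e})=1$ and, for $1\le k\le\textsc{m}+1$, $p_k(\textsc{e})$ = the determinant of the upper-left $k\times k$ submatrix of $\textsc{e}\mathbf I_{\textsc{m}+1}-\mathbf H$; $f_k(\textsc{e})=p_k(\textsc{e})\prod_{0\le j<k}\tilde a_{\textsc{m}-j}^{-1}$. $\tilde p_{\textsc{m}}$ denotes $p_{\textsc{m}}$ computed with parameters permuted by $\pi_2$, i.e. $(u_1,v_1)\leftrightarrow(u_2,v_2)$ and $(u_3,v_3)\leftrightarrow(u_4,v_4)$. *)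

theory Defs
  imports "HOL-Analysis.Analysis" "Jordan_Normal_Form.Char_Poly" "Jordan_Normal_Form.Determinant"
begin

definition theta :: "real \<Rightarrow> nat \<Rightarrow> real \<Rightarrow> real" where
  "theta p r z =
    (if r = 1 then 2 * p powr (1/4) * sin z *
        prodinf (\<lambda>n. (1 - p^(2*Suc n)) * (1 - 2 * p^(2*Suc n) * cos (2*z) + p^(4*Suc n)))
     else if r = 2 then 2 * p powr (1/4) * cos z *
        prodinf (\<lambda>n. (1 - p^(2*Suc n)) * (1 + 2 * p^(2*Suc n) * cos (2*z) + p^(4*Suc n)))
     else if r = 3 then
        prodinf (\<lambda>n. (1 - p^(2*Suc n)) * (1 + 2 * p^(2*n+1) * cos (2*z) + p^(4*n+2)))
     else
        prodinf (\<lambda>n. (1 - p^(2*Suc n)) * (1 - 2 * p^(2*n+1) * cos (2*z) + p^(4*n+2))))"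

definition br :: "real \<Rightarrow> real \<Rightarrow> nat \<Rightarrow> real \<Rightarrow> real" where
  "br p \<alpha> r z =
    (if r = 1 then theta p 1 (\<alpha>/2 * z) / (\<alpha>/2 * deriv (theta p 1) 0)
     else theta p r (\<alpha>/2 * z) / theta p r 0)"

definition perm4 :: "nat \<Rightarrow> nat \<Rightarrow> nat" where
  "perm4 r s =
    (if r = 2 then (if s = 1 then 2 else if s = 2 then 1 else if s = 3 then 4 else if s = 4 then 3 else s)
     else if r = 3 then (if s = 1 then 3 else if s = 3 then 1 else if s = 2 then 4 else if s = 4 then 2 else s)
     else if r = 4 then (if s = 1 then 4 else if s = 4 then 1 else if s = 2 then 3 else if s = 3 then 2 else s)
     else s)"

text \<open>alpha = pi/(u1+u2+M).  Parameters uu, vv are indexed by 1..4.\<close>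
definition alph :: "(nat \<Rightarrow> real) \<Rightarrow> nat \<Rightarrow> real" where
  "alph uu M = pi / (uu 1 + uu 2 + real M)"

definition cc :: "real \<Rightarrow> (nat \<Rightarrow> real) \<Rightarrow> (nat \<Rightarrow> real) \<Rightarrow> nat \<Rightarrow> real \<Rightarrow> nat \<Rightarrow> real" where
  "cc p uu vv M u r =
    (let \<alpha> = alph uu M in
     2 / (br p \<alpha> 1 u * br p \<alpha> 1 (u+1)) *
     (\<Prod>s\<in>{1..4}. br p \<alpha> s (uu (perm4 r s) - 1/2) * br p \<alpha> s (vv (perm4 r s))))"

definition aa :: "real \<Rightarrow> (nat \<Rightarrow> real) \<Rightarrow> (nat \<Rightarrow> real) \<Rightarrow> nat \<Rightarrow> int \<Rightarrow> real" where
  "aa p uu vv M k =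
    (let \<alpha> = alph uu M in
     \<Prod>r\<in>{1..4}. br p \<alpha> r (uu 1 - uu r + k) * br p \<alpha> r (uu 1 - vv r - 1/2 + k)
               / (br p \<alpha> r (uu 1 + k) * br p \<alpha> r (uu 1 - 1/2 + k)))"

definition aat :: "real \<Rightarrow> (nat \<Rightarrow> real) \<Rightarrow> (nat \<Rightarrow> real) \<Rightarrow> nat \<Rightarrow> int \<Rightarrow> real" where
  "aat p uu vv M k =
    (let \<alpha> = alph uu M in
     \<Prod>r\<in>{1..4}. br p \<alpha> r (uu 2 - uu (perm4 2 r) + k) * br p \<alpha> r (uu 2 - vv (perm4 2 r) - 1/2 + k)
               / (br p \<alpha> r (uu 2 + k) * br p \<alpha> r (uu 2 - 1/2 + k)))"

definition bb :: "real \<Rightarrow> (nat \<Rightarrow> real) \<Rightarrow> (nat \<Rightarrow> real) \<Rightarrow> nat \<Rightarrow> real \<Rightarrow> int \<Rightarrow> real" where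
  "bb p uu vv M u k =
    (let \<alpha> = alph uu M in
     \<Sum>r\<in>{1..4}. cc p uu vv M u r *
        (br p \<alpha> r (uu 1 + k + 1/2 + u) * br p \<alpha> r (uu 1 + k - 1/2 - u))
        / (br p \<alpha> r (uu 1 + k + 1/2) * br p \<alpha> r (uu 1 + k - 1/2)))"

definition Hent :: "real \<Rightarrow> (nat \<Rightarrow> real) \<Rightarrow> (nat \<Rightarrow> real) \<Rightarrow> nat \<Rightarrow> real \<Rightarrow> nat \<Rightarrow> nat \<Rightarrow> real" where
  "Hent p uu vv M u i j =
    (if i = j then bb p uu vv M u (int i)
     else if i = j + 1 then aa p uu vv M (int i)
     else if j = i + 1 then aat p uu vv M (int M - int i)
     else 0)"

definition Hmat :: "real \<Rightarrow> (nat \<Rightarrow> real) \<Rightarrow> (nat \<Rightarrow> real) \<Rightarrow> nat \<Rightarrow> real \<Rightarrow> real mat" where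
  "Hmat p uu vv M u = mat (M+1) (M+1) (\<lambda>(i,j). Hent p uu vv M u i j)"

text \<open>Monic elliptic Racah polynomials: p_k(E) = det of the upper-left k x k block of E I - H
  (used for k \<le> M+1; p_0 = 1 as the determinant of the empty matrix).\<close>
definition pp :: "real \<Rightarrow> (nat \<Rightarrow> real) \<Rightarrow> (nat \<Rightarrow> real) \<Rightarrow> nat \<Rightarrow> real \<Rightarrow> nat \<Rightarrow> real \<Rightarrow> real" where
  "pp p uu vv M u k E =
    det (mat k k (\<lambda>(i,j). (if i = j then E else 0) - Hent p uu vv M u i j))"

definition ff :: "real \<Rightarrow> (nat \<Rightarrow> real) \<Rightarrow> (nat \<Rightarrow> real) \<Rightarrow> nat \<Rightarrow> real \<Rightarrow> nat \<Rightarrow> real \<Rightarrow> real" where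
  "ff p uu vv M u k E =
    pp p uu vv M u k E * (\<Prod>j<k. inverse (aat p uu vv M (int M - int j)))"

definition Delta :: "real \<Rightarrow> (nat \<Rightarrow> real) \<Rightarrow> (nat \<Rightarrow> real) \<Rightarrow> nat \<Rightarrow> nat \<Rightarrow> real" where
  "Delta p uu vv M k =
    (\<Prod>l\<in>{1..k}. aat p uu vv M (int M + 1 - int l) / aa p uu vv M (int l))"

end

theory Submission
  imports Defs
begin


fun cont :: "(nat \<Rightarrow> real) \<Rightarrow> (nat \<Rightarrow> real) \<Rightarrow> nat \<Rightarrow> real" where
  "cont d g 0 = 1"
| "cont d g (Suc 0) = d 0"
| "cont d g (Suc (Suc n)) = d (Suc n) * cont d g (Suc n) - g (Suc n) * cont d g n"

lemma det_tridiag: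
  fixes T :: "nat \<Rightarrow> nat \<Rightarrow> real"
  assumes z1: "\<And>i j. j + 1 < i \<Longrightarrow> T i j = 0" and z2: "\<And>i j. i + 1 < j \<Longrightarrow> T i j = 0"
  shows "det (mat n n (\<lambda>(i,j). T i j)) = cont (\<lambda>i. T i i) (\<lambda>i. T i (i-1) * T (i-1) i) n"
proof (induction n rule: less_induct)
  case (less n)
  show ?case
  proof (cases n)
    case 0 then show ?thesis by simp
  next
    case (Suc m)
    show ?thesis
    proof (cases m)
      case 0 then show ?thesis using Suc by (simp add: det_def)
    next
      case (Suc n')
      have IH1: "det (mat (Suc n') (Suc n') (\<lambda>(i,j). T i j)) = cont (\<lambda>i. T i i) (\<lambda>i. T i (i-1) * T (i-1) i) (Suc n')"
        using less \<open>n = Suc m\<close> Suc by simp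
      have IH2: "det (mat n' n' (\<lambda>(i,j). T i j)) = cont (\<lambda>i. T i i) (\<lambda>i. T i (i-1) * T (i-1) i) n'"
        using less \<open>n = Suc m\<close> Suc by simp
      have nn: "n = Suc (Suc n')" using \<open>n = Suc m\<close> Suc by simp
      note 3 = IH1 IH2
      let ?A = "mat (Suc (Suc n')) (Suc (Suc n')) (\<lambda>(i,j). T i j)"
      let ?B = "mat (Suc n') (Suc n') (\<lambda>(i,j). T i (if j < n' then j else Suc j))"
      have A: "?A \<in> carrier_mat (Suc (Suc n')) (Suc (Suc n'))" by simp
      have "det ?A = (\<Sum>j<Suc (Suc n'). ?A $$ (Suc n',j) * cofactor ?A (Suc n') j)"
        by (rule laplace_expansion_row[OF A]) simp
      also have "\<dots> = (\<Sum>j<n'. ?A $$ (Suc n',j) * cofactor ?A (Suc n') j)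
          + ?A $$ (Suc n',n') * cofactor ?A (Suc n') n' + ?A $$ (Suc n',Suc n') * cofactor ?A (Suc n') (Suc n')"
        by simp
      also have "(\<Sum>j<n'. ?A $$ (Suc n',j) * cofactor ?A (Suc n') j) = 0"
        by (rule sum.neutral) (auto simp: z1)
      finally have dA: "det ?A = ?A $$ (Suc n',n') * cofactor ?A (Suc n') n' + ?A $$ (Suc n',Suc n') * cofactor ?A (Suc n') (Suc n')"
        by simp
      have m1: "mat_delete ?A (Suc n') (Suc n') = mat (Suc n') (Suc n') (\<lambda>(i,j). T i j)"
        by (rule eq_matI) (auto simp: mat_delete_def)
      have m2: "mat_delete ?A (Suc n') n' = ?B"
        by (rule eq_matI) (auto simp: mat_delete_def)
      have c1: "cofactor ?A (Suc n') (Suc n') = det (mat (Suc n') (Suc n') (\<lambda>(i,j). T i j))"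
        unfolding cofactor_def m1 by simp
      have c2: "cofactor ?A (Suc n') n' = - det ?B"
        unfolding cofactor_def m2 by simp
      have "det ?B = (\<Sum>i<Suc n'. ?B $$ (i,n') * cofactor ?B i n')"
        by (rule laplace_expansion_column) auto
      also have "\<dots> = (\<Sum>i<n'. ?B $$ (i,n') * cofactor ?B i n') + ?B $$ (n',n') * cofactor ?B n' n'"
        by simp
      also have "(\<Sum>i<n'. ?B $$ (i,n') * cofactor ?B i n') = 0"
        by (rule sum.neutral) (auto simp: z2)
      finally have dB0: "det ?B = ?B $$ (n',n') * cofactor ?B n' n'" by simp
      have m3: "mat_delete ?B n' n' = mat n' n' (\<lambda>(i,j). T i j)"
        by (rule eq_matI) (auto simp: mat_delete_def)
      from dB0 have dB: "det ?B = T n' (Suc n') * det (mat n' n' (\<lambda>(i,j). T i j))"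
        by (simp add: cofactor_def m3)
      have "det ?A = - T (Suc n') n' * (T n' (Suc n') * det (mat n' n' (\<lambda>(i,j). T i j)))
          + T (Suc n') (Suc n') * det (mat (Suc n') (Suc n') (\<lambda>(i,j). T i j))"
        using dA c1 c2 dB by simp
      then show ?thesis unfolding nn using 3 by (simp add: algebra_simps)
    qed
  qed
qed

lemma cont_cong:
  assumes "\<And>i. i < n \<Longrightarrow> d i = d' i" "\<And>i. 0 < i \<Longrightarrow> i < n \<Longrightarrow> g i = g' i"
  shows "cont d g n = cont d' g' n"
  using assms
proof (induction d g n rule: cont.induct)
  case (3 d g n)
  have "cont d g (Suc n) = cont d' g' (Suc n)" "cont d g n = cont d' g' n"
    using 3 by (metis less_SucI)+
  then show ?case using 3(3,4) by simp
qed auto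

lemma cont_start:
  "cont d g (Suc (Suc n)) = d 0 * cont (\<lambda>i. d (Suc i)) (\<lambda>i. g (Suc i)) (Suc n)
     - g 1 * cont (\<lambda>i. d (i+2)) (\<lambda>i. g (i+2)) n"
proof (induction n rule: less_induct)
  case (less n)
  show ?case
  proof (cases n)
    case 0 then show ?thesis by (simp add: algebra_simps)
  next
    case (Suc m)
    show ?thesis
    proof (cases m)
      case 0 then show ?thesis using Suc by (simp add: algebra_simps)
    next
      case (Suc k)
      have h1: "cont d g (Suc (Suc (Suc k))) = d 0 * cont (\<lambda>i. d (Suc i)) (\<lambda>i. g (Suc i)) (Suc (Suc k))
     - g 1 * cont (\<lambda>i. d (i+2)) (\<lambda>i. g (i+2)) (Suc k)" using less.IH[of "Suc k"] \<open>n = Suc m\<close> Suc by blast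
      have h2: "cont d g (Suc (Suc k)) = d 0 * cont (\<lambda>i. d (Suc i)) (\<lambda>i. g (Suc i)) (Suc k)
     - g 1 * cont (\<lambda>i. d (i+2)) (\<lambda>i. g (i+2)) k" using less.IH[of k] \<open>n = Suc m\<close> Suc less_Suc_eq by metis
      have L: "cont d g (Suc (Suc (Suc (Suc k)))) = d (Suc (Suc (Suc k))) * cont d g (Suc (Suc (Suc k))) - g (Suc (Suc (Suc k))) * cont d g (Suc (Suc k))"
        by (rule cont.simps(3))
      have R1: "cont (\<lambda>i. d (Suc i)) (\<lambda>i. g (Suc i)) (Suc (Suc (Suc k))) = d (Suc (Suc (Suc k))) * cont (\<lambda>i. d (Suc i)) (\<lambda>i. g (Suc i)) (Suc (Suc k)) - g (Suc (Suc (Suc k))) * cont (\<lambda>i. d (Suc i)) (\<lambda>i. g (Suc i)) (Suc k)"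
        by (rule cont.simps(3))
      have R2: "cont (\<lambda>i. d (i+2)) (\<lambda>i. g (i+2)) (Suc (Suc k)) = d (Suc (Suc (Suc k))) * cont (\<lambda>i. d (i+2)) (\<lambda>i. g (i+2)) (Suc k) - g (Suc (Suc (Suc k))) * cont (\<lambda>i. d (i+2)) (\<lambda>i. g (i+2)) k"
        by (subst cont.simps(3)) simp
      have nn: "n = Suc (Suc k)" using \<open>n = Suc m\<close> Suc by simp
      show ?thesis unfolding nn L R1 R2 h1 h2 by (simp add: algebra_simps)
    qed
  qed
qed

lemma cont_rev:
  "cont (\<lambda>i. d (n - 1 - i)) (\<lambda>i. g (n - i)) n = cont d g n"
proof (induction n arbitrary: d g rule: less_induct)
  case (less n)
  show ?case
  proof (cases n)
    case 0 then show ?thesis by simp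
  next
    case (Suc m)
    show ?thesis
    proof (cases m)
      case 0 then show ?thesis using Suc by simp
    next
      case (Suc k)
      have e1: "cont (\<lambda>i. d (n - 1 - i)) (\<lambda>i. g (n - i)) (Suc k) =
          cont (\<lambda>i. d (Suc (k - i))) (\<lambda>i. g (Suc (Suc k - i))) (Suc k)"
        using \<open>n = Suc m\<close> Suc by (intro cont_cong) (auto simp: Suc_diff_le)
      also have "\<dots> = cont (\<lambda>i. d (Suc i)) (\<lambda>i. g (Suc i)) (Suc k)"
        using less[of "Suc k" "\<lambda>i. d (Suc i)" "\<lambda>i. g (Suc i)"] \<open>n = Suc m\<close> Suc by simp
      finally have e1: "cont (\<lambda>i. d (n - 1 - i)) (\<lambda>i. g (n - i)) (Suc k) = 
         cont (\<lambda>i. d (Suc i)) (\<lambda>i. g (Suc i)) (Suc k)" .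
      have e2: "cont (\<lambda>i. d (n - 1 - i)) (\<lambda>i. g (n - i)) k =
          cont (\<lambda>i. d (k - 1 - i + 2)) (\<lambda>i. g (k - i + 2)) k"
        using \<open>n = Suc m\<close> Suc by (intro cont_cong) (simp_all add: Suc_diff_le Suc_diff_Suc)
      also have "\<dots> = cont (\<lambda>i. d (i+2)) (\<lambda>i. g (i+2)) k"
        using less[of k "\<lambda>i. d (i+2)" "\<lambda>i. g (i+2)"] \<open>n = Suc m\<close> Suc by simp
      finally have e2: "cont (\<lambda>i. d (n - 1 - i)) (\<lambda>i. g (n - i)) k = cont (\<lambda>i. d (i+2)) (\<lambda>i. g (i+2)) k" .
      have "cont (\<lambda>i. d (n - 1 - i)) (\<lambda>i. g (n - i)) n =
         d 0 * cont (\<lambda>i. d (n - 1 - i)) (\<lambda>i. g (n - i)) (Suc k) - g 1 * cont (\<lambda>i. d (n - 1 - i)) (\<lambda>i. g (n - i)) k"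
        using \<open>n = Suc m\<close> Suc by simp
      also have "\<dots> = cont d g n" using e1 e2 cont_start[of d g k] \<open>n = Suc m\<close> Suc by simp
      finally show ?thesis .
    qed
  qed
qed

lemma cont_dodgson:
  assumes "n \<ge> 1"
  shows "cont d g n * cont (\<lambda>i. d (Suc i)) (\<lambda>i. g (Suc i)) n
     - cont d g (Suc n) * cont (\<lambda>i. d (Suc i)) (\<lambda>i. g (Suc i)) (n - 1) = (\<Prod>l\<in>{1..n}. g l)"
  using assms
proof (induction n rule: dec_induct)
  case base then show ?case by (simp add: algebra_simps)
next
  case (step n)
  obtain m where m: "n = Suc m" using step by (cases n) auto
  let ?c1 = "cont (\<lambda>i. d (Suc i)) (\<lambda>i. g (Suc i))"
  have A: "?c1 (Suc n) = d (Suc n) * ?c1 n - g (Suc n) * ?c1 (n - 1)" using m by simp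
  have B: "cont d g (Suc (Suc n)) = d (Suc n) * cont d g (Suc n) - g (Suc n) * cont d g n" by simp
  have P: "(\<Prod>l\<in>{1..Suc n}. g l) = g (Suc n) * (\<Prod>l\<in>{1..n}. g l)"
    by (simp add: prod.atLeast1_atMost_eq mult.commute)
  have "cont d g (Suc n) * ?c1 (Suc n) - cont d g (Suc (Suc n)) * ?c1 (Suc n - 1)
     = g (Suc n) * (cont d g n * ?c1 n - cont d g (Suc n) * ?c1 (n - 1))"
    unfolding A B by (simp add: algebra_simps)
  then show ?case using step.IH P by simp
qed

lemma cont_CD:
  fixes b g :: "nat \<Rightarrow> real"
  assumes g: "\<And>l. 1 \<le> l \<Longrightarrow> l \<le> n \<Longrightarrow> g l \<noteq> 0"
  shows "(x - y) * (\<Sum>k\<le>n. cont (\<lambda>i. x - b i) g k * cont (\<lambda>i. y - b i) g k / (\<Prod>l\<in>{1..k}. g l))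
     = (cont (\<lambda>i. y - b i) g n * cont (\<lambda>i. x - b i) g (Suc n)
        - cont (\<lambda>i. x - b i) g n * cont (\<lambda>i. y - b i) g (Suc n)) / (\<Prod>l\<in>{1..n}. g l)"
  using g
proof (induction n)
  case 0 then show ?case by (simp add: algebra_simps)
next
  case (Suc n)
  let ?X = "cont (\<lambda>i. x - b i) g" and ?Y = "cont (\<lambda>i. y - b i) g"
  have gn: "g (Suc n) \<noteq> 0" using Suc by simp
  have pn: "(\<Prod>l\<in>{1..n}. g l) \<noteq> 0" using Suc by (simp add: prod_zero_iff)
  have P: "(\<Prod>l\<in>{1..Suc n}. g l) = g (Suc n) * (\<Prod>l\<in>{1..n}. g l)"
    by (simp add: prod.atLeast1_atMost_eq mult.commute)
  have IH: "(x - y) * (\<Sum>k\<le>n. ?X k * ?Y k / (\<Prod>l\<in>{1..k}. g l))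
     = (?Y n * ?X (Suc n) - ?X n * ?Y (Suc n)) / (\<Prod>l\<in>{1..n}. g l)" using Suc by simp
  have "(x - y) * (\<Sum>k\<le>Suc n. ?X k * ?Y k / (\<Prod>l\<in>{1..k}. g l)) =
     (?Y n * ?X (Suc n) - ?X n * ?Y (Suc n)) / (\<Prod>l\<in>{1..n}. g l)
     + (x - y) * (?X (Suc n) * ?Y (Suc n)) / (g (Suc n) * (\<Prod>l\<in>{1..n}. g l))"
    using IH P by (simp add: algebra_simps)
  also have "\<dots> = (?Y (Suc n) * ?X (Suc (Suc n)) - ?X (Suc n) * ?Y (Suc (Suc n))) / (g (Suc n) * (\<Prod>l\<in>{1..n}. g l))"
    using gn pn by (simp add: field_simps)
  finally show ?case using P by simp
qed


fun contp :: "(nat \<Rightarrow> real) \<Rightarrow> (nat \<Rightarrow> real) \<Rightarrow> nat \<Rightarrow> real poly" where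
  "contp b g 0 = 1"
| "contp b g (Suc 0) = [:- b 0, 1:]"
| "contp b g (Suc (Suc n)) = [:- b (Suc n), 1:] * contp b g (Suc n) - Polynomial.smult (g (Suc n)) (contp b g n)"

lemma poly_contp: "poly (contp b g n) x = cont (\<lambda>i. x - b i) g n"
  by (induction b g n rule: contp.induct) (auto simp: algebra_simps)

lemma contp_deg_coeff: "degree (contp b g n) \<le> n \<and> Polynomial.coeff (contp b g n) n = 1"
proof (induction b g n rule: contp.induct)
  case (3 b g n)
  let ?p = "contp b g (Suc n)" and ?q = "contp b g n"
  have d1: "degree ([:- b (Suc n), 1:] * ?p) \<le> Suc (Suc n)"
    using 3 degree_mult_le[of "[:- b (Suc n), 1:]" ?p] by simp
  have d2: "degree (Polynomial.smult (g (Suc n)) ?q) \<le> Suc (Suc n)"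
    using 3 by (meson degree_smult_le le_SucI order_trans)
  have deg: "degree (contp b g (Suc (Suc n))) \<le> Suc (Suc n)"
    using degree_diff_le[OF d1 d2] by simp
  have c2: "Polynomial.coeff (Polynomial.smult (g (Suc n)) ?q) (Suc (Suc n)) = 0"
    using 3 by (simp add: coeff_eq_0)
  have c1: "Polynomial.coeff ([:- b (Suc n), 1:] * ?p) (Suc (Suc n)) = 1"
    using 3 by (simp add: coeff_eq_0)
  show ?case using deg c1 c2 by simp
qed auto

lemma cont_eq_prod_roots:
  fixes E :: "nat \<Rightarrow> real"
  assumes dist: "inj_on E {0..M}"
    and roots: "\<And>l. l \<le> M \<Longrightarrow> cont (\<lambda>i. E l - b i) g (Suc M) = 0"
  shows "cont (\<lambda>i. x - b i) g (Suc M) = (\<Prod>l\<in>{0..M}. x - E l)"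
proof -
  let ?q = "\<Prod>l\<in>{0..M}. [:- E l, 1:]"
  have "contp b g (Suc M) = ?q"
  proof (rule poly_eqI_degree_lead_coeff[where n = "Suc M" and A = "E ` {0..M}"])
    show "Polynomial.coeff (contp b g (Suc M)) (Suc M) = Polynomial.coeff ?q (Suc M)"
    proof -
      have dq: "degree ?q = Suc M" by (subst degree_prod_sum_eq) auto
      have "lead_coeff ?q = 1" by (simp add: lead_coeff_prod)
      then show ?thesis using contp_deg_coeff[of b g "Suc M"] dq by simp
    qed
    show "Suc M \<le> card (E ` {0..M})" using card_image[OF dist] by simp
    show "degree (contp b g (Suc M)) \<le> Suc M" using contp_deg_coeff by blast
    show "degree ?q \<le> Suc M" by (subst degree_prod_sum_eq) auto
    show "poly (contp b g (Suc M)) z = poly ?q z" if zz: "z \<in> E ` {0..M}" for z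
    proof -
      obtain l where l: "l \<le> M" "z = E l" using zz by fastforce
      have "poly ?q z = 0" using l by (auto simp: poly_prod)
      then show ?thesis using roots[OF l(1)] l by (simp add: poly_contp)
    qed
  qed
  then have "poly (contp b g (Suc M)) x = poly ?q x" by simp
  then show ?thesis by (simp add: poly_contp poly_prod)
qed

lemma cont_norm:
  fixes E :: "nat \<Rightarrow> real" and b g :: "nat \<Rightarrow> real"
  assumes dist: "inj_on E {0..M}"
    and roots: "\<And>l. l \<le> M \<Longrightarrow> cont (\<lambda>i. E l - b i) g (Suc M) = 0"
    and g: "\<And>l. 1 \<le> l \<Longrightarrow> l \<le> M \<Longrightarrow> g l \<noteq> 0"
    and j: "j \<le> M"
  shows "(\<Sum>k\<le>M. cont (\<lambda>i. E j - b i) g k * cont (\<lambda>i. E j - b i) g k / (\<Prod>l\<in>{1..k}. g l))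
     = cont (\<lambda>i. E j - b i) g M / (\<Prod>l\<in>{1..M}. g l) * (\<Prod>l\<in>{0..M} - {j}. E j - E l)"
proof -
  define c where "c = cont (\<lambda>i. E j - b i) g M / (\<Prod>l\<in>{1..M}. g l)"
  define Sp where "Sp = (\<Sum>k\<le>M. Polynomial.smult (cont (\<lambda>i. E j - b i) g k / (\<Prod>l\<in>{1..k}. g l)) (contp b g k))"
  define Rp where "Rp = Polynomial.smult c (\<Prod>l\<in>{0..M} - {j}. [:- E l, 1:])"
  have pS: "poly Sp x = (\<Sum>k\<le>M. cont (\<lambda>i. x - b i) g k * cont (\<lambda>i. E j - b i) g k / (\<Prod>l\<in>{1..k}. g l))" for x
    unfolding Sp_def by (simp add: poly_sum poly_contp algebra_simps)
  have pR: "poly Rp x = c * (\<Prod>l\<in>{0..M} - {j}. x - E l)" for x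
    unfolding Rp_def by (simp add: poly_prod)
  have "poly ([:- E j, 1:] * Sp) x = poly ([:- E j, 1:] * Rp) x" for x
  proof -
    have "poly ([:- E j, 1:] * Sp) x = (x - E j) * poly Sp x" by (simp add: algebra_simps)
    also have "\<dots> = (cont (\<lambda>i. E j - b i) g M * cont (\<lambda>i. x - b i) g (Suc M)
        - cont (\<lambda>i. x - b i) g M * cont (\<lambda>i. E j - b i) g (Suc M)) / (\<Prod>l\<in>{1..M}. g l)"
      unfolding pS by (rule cont_CD[OF g])
    also have "\<dots> = c * (\<Prod>l\<in>{0..M}. x - E l)"
      unfolding c_def using roots[OF j] cont_eq_prod_roots[OF dist roots, of x] by simp
    also have "(\<Prod>l\<in>{0..M}. x - E l) = (x - E j) * (\<Prod>l\<in>{0..M} - {j}. x - E l)"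
      using j by (subst prod.remove[of _ j]) auto
    finally show ?thesis using pR by (simp add: algebra_simps)
  qed
  then have "[:- E j, 1:] * Sp = [:- E j, 1:] * Rp" using poly_eq_poly_eq_iff by blast
  moreover have "[:- E j, 1:] \<noteq> (0::real poly)" by simp
  ultimately have "Sp = Rp" using mult_left_cancel by blast
  then have "poly Sp (E j) = poly Rp (E j)" by simp
  then show ?thesis unfolding pS pR c_def by simp
qed



definition tf :: "real \<Rightarrow> (nat \<Rightarrow> real) \<Rightarrow> real \<Rightarrow> nat \<Rightarrow> real" where
  "tf p q c n = (1 - p^(2*Suc n)) * (1 + 2 * q n * c + (q n)^2)"

lemma tf_bounds:
  assumes p: "0 < p" "p < 1" and q: "\<And>n. 0 \<le> q n \<and> q n \<le> p^(Suc n)" and c: "\<bar>c\<bar> \<le> 1"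
  shows "tf p q c n > 0" "\<bar>tf p q c n - 1\<bar> \<le> 7 * p^(Suc n)"
proof -
  have pn: "p^(Suc n) < 1" using p by (rule power_Suc_less_one)
  have a0: "0 \<le> p^(2*Suc n)" using p by simp
  have a1: "p^(2*Suc n) \<le> p^(Suc n)" using p by (intro power_decreasing) auto
  have q0: "0 \<le> q n" and q1: "q n \<le> p^(Suc n)" using q by auto
  have qc: "\<bar>q n * c\<bar> \<le> q n" using q0 c by (simp add: abs_mult mult_left_le)
  have "(1 - q n)^2 > 0" using q1 pn by simp
  then have B: "1 + 2 * q n * c + (q n)^2 > 0" using qc by (simp add: power2_eq_square algebra_simps abs_le_iff)
  moreover have "1 - p^(2*Suc n) > 0" using a1 pn by linarith
  ultimately show "tf p q c n > 0" unfolding tf_def by simp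
  have qq: "(q n)^2 \<le> q n" using q0 q1 pn by (simp add: power2_eq_square mult_le_one mult_left_le)
  have B4: "1 + 2 * q n * c + (q n)^2 \<le> 4" using qc qq q1 pn by (simp add: abs_le_iff)
  have "tf p q c n - 1 = 2 * q n * c + (q n)^2 - p^(2*Suc n) * (1 + 2 * q n * c + (q n)^2)"
    unfolding tf_def by (simp add: algebra_simps)
  also have "\<bar>\<dots>\<bar> \<le> 2 * q n + q n + p^(2*Suc n) * 4"
  proof -
    have "\<bar>p^(2*Suc n) * (1 + 2 * q n * c + (q n)^2)\<bar> = p^(2*Suc n) * (1 + 2 * q n * c + (q n)^2)"
      using B a0 by simp
    also have "\<dots> \<le> p^(2*Suc n) * 4"
      using B4 a0 by (rule mult_left_mono)
    finally have "\<bar>p^(2*Suc n) * (1 + 2 * q n * c + (q n)^2)\<bar> \<le> p^(2*Suc n) * 4" .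
    then show ?thesis using qc qq q0 zero_le_power2[of "q n"] by (simp only: abs_le_iff mult.assoc) linarith
  qed
  also have "\<dots> \<le> 7 * p^(Suc n)" using q1 a1 by simp
  finally show "\<bar>tf p q c n - 1\<bar> \<le> 7 * p^(Suc n)" .
qed

lemma summable_geom7: "0 < p \<Longrightarrow> p < (1::real) \<Longrightarrow> summable (\<lambda>n. 7 * p^(Suc n))"
  by (intro summable_mult summable_mult2) (simp add: summable_geometric)

lemma tf_prod:
  assumes p: "0 < p" "p < 1" and q: "\<And>n. 0 \<le> q n \<and> q n \<le> p^(Suc n)" and c: "\<bar>c\<bar> \<le> 1"
  shows "convergent_prod (tf p q c)" "prodinf (tf p q c) > 0"
proof -
  have s: "summable (\<lambda>n. \<bar>tf p q c n - 1\<bar>)"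
    by (rule summable_comparison_test'[OF summable_geom7[OF p]]) (use tf_bounds[OF p q c] in auto)
  have "convergent_prod (\<lambda>n. 1 + (tf p q c n - 1))"
  proof (rule summable_imp_convergent_prod_real[OF s])
    fix n show "tf p q c n - 1 \<noteq> - 1" using tf_bounds(1)[OF p q c, of n] by linarith
  qed
  then show cp: "convergent_prod (tf p q c)" by simp
  show "prodinf (tf p q c) > 0" by (rule less_0_prodinf[OF cp]) (use tf_bounds[OF p q c] in auto)
qed

lemma tf_cont:
  assumes p: "0 < p" "p < 1" and q: "\<And>n. 0 \<le> q n \<and> q n \<le> p^(Suc n)" and s: "\<bar>s\<bar> \<le> 1"
  shows "isCont (\<lambda>z. prodinf (tf p q (s * cos (2*z)))) x"
proof -
  let ?A = "cball x 1"
  have cz: "\<bar>s * cos (2*z)\<bar> \<le> 1" for z using s by (simp add: abs_mult mult_le_one)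
  have uc: "uniformly_convergent_on ?A (\<lambda>N z. \<Prod>n<N. tf p q (s * cos (2*z)) n)"
  proof (rule uniformly_convergent_on_prod')
    show "continuous_on ?A (\<lambda>z. tf p q (s * cos (2*z)) n)" for n
      unfolding tf_def by (intro continuous_intros)
    show "compact ?A" by simp
    show "uniformly_convergent_on ?A (\<lambda>N z. \<Sum>n<N. norm (tf p q (s * cos (2*z)) n - 1))"
      by (rule Weierstrass_m_test'[OF _ summable_geom7[OF p]]) (use tf_bounds(2)[OF p q cz] in auto)
  qed
  then obtain l where ul: "uniform_limit ?A (\<lambda>N z. \<Prod>n<N. tf p q (s * cos (2*z)) n) l sequentially"
    unfolding uniformly_convergent_on_def by blast
  have "\<forall>N. continuous_on ?A (\<lambda>z. \<Prod>k<N. tf p q (s * cos (2*z)) k)"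
    unfolding tf_def by (intro allI continuous_intros)
  then have cl: "continuous_on ?A l"
    by (intro uniform_limit_theorem[OF _ ul] always_eventually) (simp_all add: trivial_limit_sequentially)
  have leq: "l z = prodinf (tf p q (s * cos (2*z)))" if "z \<in> ?A" for z
  proof -
    have "(\<lambda>N. \<Prod>n<N. tf p q (s * cos (2*z)) n) \<longlonglongrightarrow> l z"
      using tendsto_uniform_limitI[OF ul that] .
    moreover have "(\<lambda>N. \<Prod>n<N. tf p q (s * cos (2*z)) n) \<longlonglongrightarrow> prodinf (tf p q (s * cos (2*z)))"
      using convergent_prod_LIMSEQ[OF tf_prod(1)[OF p q cz]] by (simp add: LIMSEQ_lessThan_iff_atMost)
    ultimately show ?thesis by (rule LIMSEQ_unique)
  qed
  have "continuous_on ?A (\<lambda>z. prodinf (tf p q (s * cos (2*z))))"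
    by (rule iffD1[OF continuous_on_cong[OF refl leq] cl])
  then show ?thesis
    by (rule continuous_on_interior) (simp add: interior_cball)
qed

lemma pa: "(p^(2*Suc n))^2 = (p::real)^(4*Suc n)"
proof - have e: "4*Suc n = 2*Suc n*2" by simp
  show ?thesis unfolding e by (rule power_mult[symmetric]) qed
lemma pb: "(p^(2*n+1))^2 = (p::real)^(4*n+2)"
proof - have e: "4*n+2 = (2*n+1)*2" by simp
  show ?thesis unfolding e by (rule power_mult[symmetric]) qed

lemma theta_tf:
  "theta p 1 z = 2 * p powr (1/4) * sin z * prodinf (tf p (\<lambda>n. p^(2*Suc n)) (- 1 * cos (2*z)))"
  "theta p 2 z = 2 * p powr (1/4) * cos z * prodinf (tf p (\<lambda>n. p^(2*Suc n)) (1 * cos (2*z)))"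
  "theta p 3 z = prodinf (tf p (\<lambda>n. p^(2*n+1)) (1 * cos (2*z)))"
  "theta p 4 z = prodinf (tf p (\<lambda>n. p^(2*n+1)) (- 1 * cos (2*z)))"
proof -
  have e1: "(\<lambda>n. (1 - p^(2*Suc n)) * (1 - 2 * p^(2*Suc n) * cos (2*z) + p^(4*Suc n))) = tf p (\<lambda>n. p^(2*Suc n)) (- 1 * cos (2*z))"
    by (rule ext) (simp only: tf_def pa[symmetric] mult_minus_left mult_minus_right mult_1_left diff_conv_add_uminus)
  have e2: "(\<lambda>n. (1 - p^(2*Suc n)) * (1 + 2 * p^(2*Suc n) * cos (2*z) + p^(4*Suc n))) = tf p (\<lambda>n. p^(2*Suc n)) (1 * cos (2*z))"
    by (rule ext) (simp only: tf_def pa[symmetric] mult_1_left)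
  have e3: "(\<lambda>n. (1 - p^(2*Suc n)) * (1 + 2 * p^(2*n+1) * cos (2*z) + p^(4*n+2))) = tf p (\<lambda>n. p^(2*n+1)) (1 * cos (2*z))"
    by (rule ext) (simp only: tf_def pb[symmetric] mult_1_left)
  have e4: "(\<lambda>n. (1 - p^(2*Suc n)) * (1 - 2 * p^(2*n+1) * cos (2*z) + p^(4*n+2))) = tf p (\<lambda>n. p^(2*n+1)) (- 1 * cos (2*z))"
    by (rule ext) (simp only: tf_def pb[symmetric] mult_minus_left mult_minus_right mult_1_left diff_conv_add_uminus)
  show "theta p 1 z = 2 * p powr (1/4) * sin z * prodinf (tf p (\<lambda>n. p^(2*Suc n)) (- 1 * cos (2*z)))"
    unfolding theta_def e1[symmetric] by simp
  show "theta p 2 z = 2 * p powr (1/4) * cos z * prodinf (tf p (\<lambda>n. p^(2*Suc n)) (1 * cos (2*z)))"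
    unfolding theta_def e2[symmetric] by simp
  show "theta p 3 z = prodinf (tf p (\<lambda>n. p^(2*n+1)) (1 * cos (2*z)))"
    unfolding theta_def e3[symmetric] by simp
  show "theta p 4 z = prodinf (tf p (\<lambda>n. p^(2*n+1)) (- 1 * cos (2*z)))"
    unfolding theta_def e4[symmetric] by simp
qed

lemma q1: "0 < p \<Longrightarrow> p < (1::real) \<Longrightarrow> 0 \<le> p^(2*Suc n) \<and> p^(2*Suc n) \<le> p^(Suc n)"
  using power_decreasing[of "Suc n" "2*Suc n" p] by simp
lemma q3: "0 < p \<Longrightarrow> p < (1::real) \<Longrightarrow> 0 \<le> p^(2*n+1) \<and> p^(2*n+1) \<le> p^(Suc n)"
  using power_decreasing[of "Suc n" "2*n+1" p] by simp

lemma theta_pos: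
  assumes p: "0 < p" "p < 1"
  shows "theta p 3 z > 0" "theta p 4 z > 0"
    "sin z > 0 \<Longrightarrow> theta p 1 z > 0" "cos z > 0 \<Longrightarrow> theta p 2 z > 0"
  using tf_prod(2)[OF p q1[OF p], of "- 1 * cos (2*z)"] tf_prod(2)[OF p q1[OF p], of "1 * cos (2*z)"]
        tf_prod(2)[OF p q3[OF p], of "- 1 * cos (2*z)"] tf_prod(2)[OF p q3[OF p], of "1 * cos (2*z)"]
  unfolding theta_tf using p by auto

lemma theta_reflect:
  "theta p 1 (pi/2 - w) = theta p 2 w" "theta p 2 (pi/2 - w) = theta p 1 w"
  "theta p 3 (pi/2 - w) = theta p 4 w" "theta p 4 (pi/2 - w) = theta p 3 w"
proof -
  have c: "cos (2 * (pi/2 - v)) = - cos (2 * v)" for v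
    by (simp add: right_diff_distrib cos_diff)
  show "theta p 1 (pi/2 - w) = theta p 2 w" "theta p 2 (pi/2 - w) = theta p 1 w"
    "theta p 3 (pi/2 - w) = theta p 4 w" "theta p 4 (pi/2 - w) = theta p 3 w"
    unfolding theta_tf c by (simp_all add: sin_diff cos_diff)
qed

lemma theta1_deriv:
  assumes p: "0 < p" "p < 1"
  shows "deriv (theta p 1) 0 > 0"
proof -
  let ?G = "\<lambda>z. prodinf (tf p (\<lambda>n. p^(2*Suc n)) (- 1 * cos (2*z)))"
  have Gc: "isCont ?G 0" by (rule tf_cont[OF p q1[OF p]]) simp
  have G0: "?G 0 > 0" by (rule tf_prod(2)[OF p q1[OF p]]) simp
  have "((\<lambda>h. 2 * p powr (1/4) * (sin h / h) * ?G h) \<longlongrightarrow> 2 * p powr (1/4) * 1 * ?G 0) (at 0)"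
  proof (intro tendsto_mult tendsto_const)
    show "((\<lambda>h. sin h / h) \<longlongrightarrow> (1::real)) (at (0::real))"
      using DERIV_sin[of "0::real"] unfolding DERIV_def by simp
    show "(?G \<longlongrightarrow> ?G 0) (at 0)" using Gc isCont_def by blast
  qed
  then have "((\<lambda>h. (theta p 1 (0 + h) - theta p 1 0) / h) \<longlongrightarrow> 2 * p powr (1/4) * ?G 0) (at 0)"
    unfolding theta_tf by simp
  then have "DERIV (theta p 1) 0 :> 2 * p powr (1/4) * ?G 0"
    unfolding DERIV_def .
  then have "deriv (theta p 1) 0 = 2 * p powr (1/4) * ?G 0" by (rule DERIV_imp_deriv)
  then show ?thesis using G0 p by simp
qed



lemma prod4: "(\<Prod>r\<in>{1..4::nat}. f r) = f 1 * f 2 * f 3 * (f 4 :: real)"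
proof -
  have "{1..4::nat} = {1,2,3,4}" by auto
  then show ?thesis by (simp add: mult.assoc)
qed

lemma sum4: "(\<Sum>r\<in>{1..4::nat}. f r) = f 1 + f 2 + f 3 + (f 4 :: real)"
proof -
  have "{1..4::nat} = {1,2,3,4}" by auto
  then show ?thesis by (simp add: add.assoc)
qed

lemma perm4_vals:
  "perm4 2 1 = 2" "perm4 2 2 = 1" "perm4 2 3 = 4" "perm4 2 4 = 3"
  "perm4 1 s = s"
  "perm4 3 1 = 3" "perm4 3 2 = 4" "perm4 3 3 = 1" "perm4 3 4 = 2"
  "perm4 4 1 = 4" "perm4 4 2 = 3" "perm4 4 3 = 2" "perm4 4 4 = 1"
  by (simp_all add: perm4_def)

lemma r4: "r \<in> {1..4::nat} \<Longrightarrow> r = 1 \<or> r = 2 \<or> r = 3 \<or> r = 4" by auto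

lemma alph_perm: "alph (uu \<circ> perm4 2) M = alph uu M"
  by (simp add: alph_def perm4_def add.commute)

lemma aa_perm: "aa p (uu \<circ> perm4 2) (vv \<circ> perm4 2) M k = aat p uu vv M k"
  unfolding aa_def aat_def Let_def alph_perm prod4 by (simp add: perm4_def)

lemma aat_perm: "aat p (uu \<circ> perm4 2) (vv \<circ> perm4 2) M k = aa p uu vv M k"
  unfolding aa_def aat_def Let_def alph_perm prod4 by (simp add: perm4_def)

lemma cc_perm: "r \<in> {1..4} \<Longrightarrow> cc p (uu \<circ> perm4 2) (vv \<circ> perm4 2) M u r = cc p uu vv M u (perm4 2 r)"
  unfolding cc_def Let_def alph_perm prod4
  by (drule r4) (elim disjE; simp add: perm4_def mult_ac)


definition Nn :: "real \<Rightarrow> real \<Rightarrow> nat \<Rightarrow> real" where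
  "Nn p \<alpha> r = (if r = 1 then \<alpha>/2 * deriv (theta p 1) 0 else theta p r 0)"

lemma br_Nn: "br p \<alpha> r x = theta p r (\<alpha>/2*x) / Nn p \<alpha> r"
  by (simp add: br_def Nn_def)

lemma Nn_pos:
  assumes p: "0 < p" "p < 1" and a: "\<alpha> > 0" and r: "r \<in> {1..4}"
  shows "Nn p \<alpha> r > 0"
proof -
  have "theta p 2 0 > 0" using theta_pos(4)[OF p, of 0] by simp
  then show ?thesis using r4[OF r] theta1_deriv[OF p] theta_pos(1,2)[OF p, of 0] a
    by (auto simp: Nn_def)
qed

lemma theta_reflect':
  "theta p (Suc 0) (pi/2 - w) = theta p 2 w" "theta p 2 (pi/2 - w) = theta p (Suc 0) w"
  using theta_reflect(1,2)[of p w] by simp_all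

lemma theta_refl_perm: "r \<in> {1..4} \<Longrightarrow> theta p r (pi/2 - w) = theta p (perm4 2 r) w"
  by (drule r4) (auto simp: perm4_def theta_reflect theta_reflect')

lemma br_refl:
  assumes p: "0 < p" "p < 1" and a: "\<alpha> > 0" and aS: "\<alpha> * S = pi" and r: "r \<in> {1..4}"
  shows "br p \<alpha> r (S - y) = (Nn p \<alpha> (perm4 2 r) / Nn p \<alpha> r) * br p \<alpha> (perm4 2 r) y"
proof -
  have "\<alpha>/2 * (S - y) = (\<alpha> * S)/2 - \<alpha>/2 * y" by (simp add: right_diff_distrib)
  then have e: "\<alpha>/2 * (S - y) = pi/2 - \<alpha>/2 * y" using aS by simp
  have r': "perm4 2 r \<in> {1..4}" using r4[OF r] by (auto simp: perm4_def)
  have n1: "Nn p \<alpha> (perm4 2 r) \<noteq> 0" using Nn_pos[OF p a r'] by simp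
  show ?thesis unfolding br_Nn e theta_refl_perm[OF r] using n1 by simp
qed

lemma ratio_pos: "0 < (a::real) \<Longrightarrow> 0 < b \<Longrightarrow> 0 < c \<Longrightarrow> 0 < d \<Longrightarrow> 0 < a*b/(c*d)"
  by simp

lemma br_pos:
  assumes p: "0 < p" "p < 1" and a: "\<alpha> > 0" and aS: "\<alpha> * S = pi" and r: "r \<in> {1..4}"
    and h1: "r = 1 \<Longrightarrow> 0 < x \<and> x < 2*S" and h2: "r = 2 \<Longrightarrow> -S < x \<and> x < S"
  shows "br p \<alpha> r x > 0"
proof -
  have N: "Nn p \<alpha> r > 0" by (rule Nn_pos[OF p a r])
  have "theta p r (\<alpha>/2*x) > 0"
  proof -
    consider "r = 1" | "r = 2" | "r = 3" | "r = 4" using r4[OF r] by blast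
    then show ?thesis
    proof cases
      case 1
      have "0 < \<alpha>/2*x" using h1[OF 1] a by simp
      moreover have "\<alpha>/2*x < pi"
      proof -
        have "\<alpha> * x < \<alpha> * (2*S)" using h1[OF 1] a by (intro mult_strict_left_mono) auto
        moreover have "\<alpha> * (2*S) = 2*pi" using aS by (simp add: algebra_simps)
        ultimately show ?thesis by simp
      qed
      ultimately show ?thesis using 1 theta_pos(3)[OF p] sin_gt_zero by blast
    next
      case 2
      have "\<alpha> * x < \<alpha> * S" using h2[OF 2] a by (intro mult_strict_left_mono) auto
      moreover have "\<alpha> * (-S) < \<alpha> * x" using h2[OF 2] a by (intro mult_strict_left_mono) auto
      ultimately have "- (pi/2) < \<alpha>/2*x" "\<alpha>/2*x < pi/2" using aS by simp_all
      then show ?thesis using 2 theta_pos(4)[OF p] cos_gt_zero_pi by blast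
    qed (use theta_pos[OF p] in auto)
  qed
  then show ?thesis unfolding br_Nn using N by simp
qed


lemma alph_facts:
  assumes "uu 1 > 0" "uu 2 > 0"
  shows "alph uu M > 0" "alph uu M * (uu 1 + uu 2 + real M) = pi"
  using assms by (auto simp: alph_def)

lemma aa_aat_pos:
  assumes p: "0 < p" "p < 1" and hu: "uu 1 > 0" "uu 2 > 0"
    and hv: "\<bar>vv 1\<bar> < uu 1 + 1/2" "\<bar>vv 2\<bar> < uu 2 + 1/2" and k: "1 \<le> k" "k \<le> M"
  shows "aa p uu vv M (int k) > 0" "aat p uu vv M (int k) > 0"
proof -
  note bp = br_pos[OF p alph_facts[OF hu]]
  have kk: "1 \<le> real k" "real k \<le> real M" using k by auto
  show "aa p uu vv M (int k) > 0"
    unfolding aa_def Let_def prod4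
    by (intro mult_pos_pos ratio_pos bp) (use hu hv kk in \<open>auto simp: abs_less_iff\<close>)
  show "aat p uu vv M (int k) > 0"
    unfolding aat_def Let_def prod4 perm4_vals
    by (intro mult_pos_pos ratio_pos bp) (use hu hv kk in \<open>auto simp: abs_less_iff\<close>)
qed


lemma ratio_K: "(K::real) \<noteq> 0 \<Longrightarrow> c * ((K*a)*(K*b)) / ((K*c')*(K*d)) = c * (a*b)/(c'*d)"
proof (cases "c' * d = 0")
  case True then show ?thesis by auto
next
  case False
  assume K: "K \<noteq> 0"
  then show ?thesis using False by (simp add: field_simps)
qed

lemma term_refl:
  assumes p: "0 < p" "p < 1" and a: "\<alpha> > 0" and aS: "\<alpha> * S = pi" and r: "r \<in> {1..4}"
  shows "c * (br p \<alpha> r (S - A) * br p \<alpha> r (S - B)) / (br p \<alpha> r (S - C) * br p \<alpha> r (S - D))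
       = c * (br p \<alpha> (perm4 2 r) A * br p \<alpha> (perm4 2 r) B) / (br p \<alpha> (perm4 2 r) C * br p \<alpha> (perm4 2 r) D)"
proof -
  have r': "perm4 2 r \<in> {1..4}" using r4[OF r] by (auto simp: perm4_def)
  have "Nn p \<alpha> (perm4 2 r) / Nn p \<alpha> r \<noteq> 0" using Nn_pos[OF p a r] Nn_pos[OF p a r'] by simp
  then show ?thesis unfolding br_refl[OF p a aS r] by (rule ratio_K)
qed

lemma bb_perm:
  assumes p: "0 < p" "p < 1" and hu: "uu 1 > 0" "uu 2 > 0" and i: "i \<le> M"
  shows "bb p (uu \<circ> perm4 2) (vv \<circ> perm4 2) M u (int i) = bb p uu vv M u (int (M - i))"
proof -
  define S where "S = uu 1 + uu 2 + real M"
  define m where "m = real_of_int (int (M - i))"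
  let ?\<alpha> = "alph uu M"
  note af = alph_facts[OF hu, of M, folded S_def]
  have e1: "uu 2 + real_of_int (int i) + 1/2 + u = S - (uu 1 + m - 1/2 - u)"
   and e2: "uu 2 + real_of_int (int i) - 1/2 - u = S - (uu 1 + m + 1/2 + u)"
   and e3: "uu 2 + real_of_int (int i) + 1/2 = S - (uu 1 + m - 1/2)"
   and e4: "uu 2 + real_of_int (int i) - 1/2 = S - (uu 1 + m + 1/2)"
    using i by (auto simp: S_def m_def of_nat_diff)
  have u1: "(uu \<circ> perm4 2) 1 = uu 2" by (simp add: perm4_def)
  have "bb p (uu \<circ> perm4 2) (vv \<circ> perm4 2) M u (int i) =
     (\<Sum>r\<in>{1..4}. cc p uu vv M u (perm4 2 r) *
        (br p ?\<alpha> r (S - (uu 1 + m - 1/2 - u)) * br p ?\<alpha> r (S - (uu 1 + m + 1/2 + u)))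
        / (br p ?\<alpha> r (S - (uu 1 + m - 1/2)) * br p ?\<alpha> r (S - (uu 1 + m + 1/2))))"
  proof -
    have e5: "S - (uu 1 + m - 1/2) + u = S - (uu 1 + m - 1/2 - u)"
     and e6: "S - (uu 1 + m + 1/2) - u = S - (uu 1 + m + 1/2 + u)" by simp_all
    show ?thesis
      unfolding bb_def Let_def alph_perm u1 e1 e2 e3 e4 e5 e6
      by (rule sum.cong[OF refl]) (simp only: cc_perm)
  qed
  also have "\<dots> = (\<Sum>r\<in>{1..4}. cc p uu vv M u (perm4 2 r) *
        (br p ?\<alpha> (perm4 2 r) (uu 1 + m - 1/2 - u) * br p ?\<alpha> (perm4 2 r) (uu 1 + m + 1/2 + u))
        / (br p ?\<alpha> (perm4 2 r) (uu 1 + m - 1/2) * br p ?\<alpha> (perm4 2 r) (uu 1 + m + 1/2)))"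
    by (rule sum.cong[OF refl]) (rule term_refl[OF p af])
  also have "\<dots> = bb p uu vv M u (int (M - i))"
    unfolding bb_def Let_def sum4 perm4_vals m_def[symmetric]
    by (simp add: mult.commute)
  finally show ?thesis .
qed


lemma Hent_perm:
  assumes p: "0 < p" "p < 1" and hu: "uu 1 > 0" "uu 2 > 0" and i: "i \<le> M" and j: "j \<le> M"
  shows "Hent p (uu \<circ> perm4 2) (vv \<circ> perm4 2) M u i j = Hent p uu vv M u (M - i) (M - j)"
proof -
  consider "i = j" | "i = j + 1" | "j = i + 1" | "i \<noteq> j" "i \<noteq> j + 1" "j \<noteq> i + 1" by blast
  then show ?thesis
  proof cases
    case 1 then show ?thesis using bb_perm[OF p hu i] by (simp add: Hent_def)
  next
    case 2
    have "M - j = M - i + 1" using 2 i by simp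
    then show ?thesis using 2 i by (simp add: Hent_def aa_perm of_nat_diff)
  next
    case 3
    have "M - i = M - j + 1" using 3 j by simp
    then show ?thesis using 3 j by (simp add: Hent_def aat_perm of_nat_diff)
  next
    case 4
    then show ?thesis using i j by (auto simp: Hent_def)
  qed
qed

definition gam :: "real \<Rightarrow> (nat \<Rightarrow> real) \<Rightarrow> (nat \<Rightarrow> real) \<Rightarrow> nat \<Rightarrow> nat \<Rightarrow> real" where
  "gam p uu vv M l = aa p uu vv M (int l) * aat p uu vv M (int M + 1 - int l)"

lemma pp_cont:
  "pp p uu vv M u k E = cont (\<lambda>i. E - bb p uu vv M u (int i)) (gam p uu vv M) k"
proof -
  let ?T = "\<lambda>i j. (if i = j then E else 0) - Hent p uu vv M u i j"
  have "pp p uu vv M u k E = det (mat k k (\<lambda>(i,j). ?T i j))" by (simp add: pp_def)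
  also have "\<dots> = cont (\<lambda>i. ?T i i) (\<lambda>i. ?T i (i-1) * ?T (i-1) i) k"
    by (rule det_tridiag) (auto simp: Hent_def)
  also have "\<dots> = cont (\<lambda>i. E - bb p uu vv M u (int i)) (gam p uu vv M) k"
  proof (rule cont_cong)
    fix i assume "0 < i" "i < k"
    then have e: "int M - (int i - 1) = int M + 1 - int i" by simp
    have n: "i - Suc 0 \<noteq> Suc i" "i - Suc 0 \<noteq> i" using \<open>0 < i\<close> by auto
    show "?T i (i-1) * ?T (i-1) i = gam p uu vv M i"
      using \<open>0 < i\<close> n by (simp add: Hent_def gam_def e of_nat_diff)
  qed (simp add: Hent_def)
  finally show ?thesis .
qed

lemma ppt_cont:
  assumes p: "0 < p" "p < 1" and hu: "uu 1 > 0" "uu 2 > 0"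
  shows "pp p (uu \<circ> perm4 2) (vv \<circ> perm4 2) M u M E
     = cont (\<lambda>i. E - bb p uu vv M u (int (Suc i))) (\<lambda>i. gam p uu vv M (Suc i)) M"
proof -
  let ?H = "Hent p (uu \<circ> perm4 2) (vv \<circ> perm4 2) M u"
  let ?T = "\<lambda>i j. (if i = j then E else 0) - ?H i j"
  have "pp p (uu \<circ> perm4 2) (vv \<circ> perm4 2) M u M E = det (mat M M (\<lambda>(i,j). ?T i j))" by (simp add: pp_def)
  also have "\<dots> = cont (\<lambda>i. ?T i i) (\<lambda>i. ?T i (i-1) * ?T (i-1) i) M"
    by (rule det_tridiag) (auto simp: Hent_def)
  also have "\<dots> = cont (\<lambda>i. E - bb p uu vv M u (int (Suc (M - 1 - i)))) (\<lambda>i. gam p uu vv M (Suc (M - i))) M"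
  proof (rule cont_cong)
    fix i assume i: "i < M"
    show "?T i i = E - bb p uu vv M u (int (Suc (M - 1 - i)))"
      using i Hent_perm[OF p hu, where i=i and j=i and M=M and vv=vv and u=u] by (simp add: Hent_def Suc_diff_Suc)
  next
    fix i assume i: "0 < i" "i < M"
    have h1: "?H i (i-1) = Hent p uu vv M u (M - i) (Suc (M - i))"
      using i Hent_perm[OF p hu, where i=i and j="i-1" and M=M and vv=vv and u=u] by (simp add: Suc_diff_Suc Suc_diff_le)
    have h2: "?H (i-1) i = Hent p uu vv M u (Suc (M - i)) (M - i)"
      using i Hent_perm[OF p hu, where i="i-1" and j=i and M=M and vv=vv and u=u] by (simp add: Suc_diff_Suc Suc_diff_le)
    have e: "int M - int (M - i) = int M + 1 - int (Suc (M - i))" using i by simp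
    show "?T i (i-1) * ?T (i-1) i = gam p uu vv M (Suc (M - i))"
      using i unfolding h1 h2 by (auto simp: Hent_def gam_def e mult.commute)
  qed
  also have "\<dots> = cont (\<lambda>i. E - bb p uu vv M u (int (Suc i))) (\<lambda>i. gam p uu vv M (Suc i)) M"
    by (rule cont_rev)
  finally show ?thesis .
qed



lemma ev_root:
  assumes "eigenvalue (Hmat p uu vv M u) E"
  shows "pp p uu vv M u (Suc M) E = 0"
proof -
  let ?A = "Hmat p uu vv M u"
  have A: "?A \<in> carrier_mat (Suc M) (Suc M)" by (simp add: Hmat_def)
  have d0: "det (char_matrix ?A E) = 0" using assms eigenvalue_det[OF A] by simp
  have "mat (Suc M) (Suc M) (\<lambda>(i,j). (if i = j then E else 0) - Hent p uu vv M u i j)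
        = (-1) \<cdot>\<^sub>m char_matrix ?A E"
    by (rule eq_matI) (auto simp: char_matrix_def Hmat_def)
  then show ?thesis unfolding pp_def using d0 A by (simp add: char_matrix_def)
qed

lemma prod_shift_aat:
  "(\<Prod>j<k. f (int M - int j)) = (\<Prod>l\<in>{1..k}. f (int M + 1 - int l))"
proof (induction k)
  case 0 then show ?case by simp
next
  case (Suc k)
  have "{1..Suc k} = insert (Suc k) {1..k}" by auto
  then show ?case using Suc by (simp add: mult.commute)
qed

lemma ffD:
  assumes X: "(\<Prod>l\<in>{1..k}. aat p uu vv M (int M + 1 - int l)) \<noteq> 0"
  shows "ff p uu vv M u k x * ff p uu vv M u k y * Delta p uu vv M k
     = pp p uu vv M u k x * pp p uu vv M u k y / (\<Prod>l\<in>{1..k}. gam p uu vv M l)"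
proof -
  let ?X = "\<Prod>l\<in>{1..k}. aat p uu vv M (int M + 1 - int l)"
  let ?Y = "\<Prod>l\<in>{1..k}. aa p uu vv M (int l)"
  have i: "(\<Prod>j<k. inverse (aat p uu vv M (int M - int j))) = inverse ?X"
    using prod_shift_aat[of "\<lambda>t. inverse (aat p uu vv M t)" M k] prod_inversef[of "\<lambda>t. aat p uu vv M (int M + 1 - int t)" "{1..k}"]
    by (simp add: o_def)
  have D: "Delta p uu vv M k = ?X / ?Y" unfolding Delta_def by (rule prod_dividef)
  have G: "(\<Prod>l\<in>{1..k}. gam p uu vv M l) = ?Y * ?X" unfolding gam_def by (rule prod.distrib)
  show ?thesis unfolding ff_def i D G using X by (simp add: field_simps power2_eq_square)
qed

theorem mainTheorem7:
  fixes p u :: real and uu vv :: "nat \<Rightarrow> real" and M :: nat and E :: "nat \<Rightarrow> real"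
  assumes hp: "0 < p" "p < 1"
    and hu: "uu 1 > 0" "uu 2 > 0"
    and hv: "\<bar>vv 1\<bar> < uu 1 + 1/2" "\<bar>vv 2\<bar> < uu 2 + 1/2"
    and hu0: "\<forall>n::int. u \<noteq> 2 * pi / alph uu M * of_int n"
    and hu1: "\<forall>n::int. u + 1 \<noteq> 2 * pi / alph uu M * of_int n"
    and hE_eig: "\<forall>i\<le>M. eigenvalue (Hmat p uu vv M u) (E i)"
    and hE_dec: "\<forall>i j. i < j \<longrightarrow> j \<le> M \<longrightarrow> E j < E i"
    and hi: "i \<le> M" and hj: "j \<le> M"
  shows
    "(let A = (\<Prod>l\<in>{1..M}. aa p uu vv M (int l));
          \<epsilon> = pp p (uu \<circ> perm4 2) (vv \<circ> perm4 2) M u M (E j) / A;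
          P = (\<Prod>l\<in>{0..M} - {j}. \<bar>E j - E l\<bar>);
          N = 1 / (\<bar>\<epsilon>\<bar> * A) * P
      in (\<Sum>k\<in>{0..M}. ff p uu vv M u k (E i) * ff p uu vv M u k (E j) * Delta p uu vv M k)
           = (if i = j then N else 0)
         \<and> N = 1 / \<bar>\<epsilon>\<bar> *
              (\<Prod>k\<in>{1..M}. \<Prod>r\<in>{1..4}.
                 br p (alph uu M) r (uu 1 + real k) * br p (alph uu M) r (uu 1 - 1/2 + real k)
                 / (br p (alph uu M) r (uu 1 - uu r + real k)
                    * br p (alph uu M) r (uu 1 - vv r - 1/2 + real k))) * P)"
proof -
  define b where "b i = bb p uu vv M u (int i)" for i
  define g where "g = gam p uu vv M"
  define P where "P x k = cont (\<lambda>i. x - b i) g k" for x k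
  define \<beta> where "\<beta> k = (\<Prod>l\<in>{1..k}. g l)" for k
  note apos = aa_aat_pos[OF hp hu hv]
  have gpos: "g l > 0" if "1 \<le> l" "l \<le> M" for l
  proof -
    have e: "int M + 1 - int l = int (M + 1 - l)" using that by simp
    have "aat p uu vv M (int (M + 1 - l)) > 0" using apos(2)[of "M + 1 - l"] that by simp
    then show ?thesis using apos(1)[OF that] unfolding g_def gam_def e by simp
  qed
  have bpos: "\<beta> k > 0" if "k \<le> M" for k
    unfolding \<beta>_def using that by (intro prod_pos gpos) auto
  have ppP: "pp p uu vv M u k x = P x k" for k x
    unfolding pp_cont P_def b_def g_def ..
  have roots: "P (E l) (Suc M) = 0" if "l \<le> M" for l
    using ev_root[of p uu vv M u "E l"] hE_eig that ppP by simp
  have inj: "inj_on E {0..M}"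
  proof (rule inj_onI)
    fix x y assume "x \<in> {0..M}" "y \<in> {0..M}" "E x = E y"
    then show "x = y" using hE_dec by (metis atLeastAtMost_iff less_irrefl linorder_neq_iff)
  qed
  have gne: "g l \<noteq> 0" if "1 \<le> l" "l \<le> M" for l using gpos[OF that] by simp
  have Xne: "(\<Prod>l\<in>{1..k}. aat p uu vv M (int M + 1 - int l)) \<noteq> 0" if "k \<le> M" for k
  proof -
    have "(\<Prod>l\<in>{1..k}. aat p uu vv M (int M + 1 - int l)) > 0"
    proof (rule prod_pos)
      fix l assume l: "l \<in> {1..k}"
      have e: "int M + 1 - int l = int (M + 1 - l)" using l that by auto
      show "aat p uu vv M (int M + 1 - int l) > 0" unfolding e using apos(2)[of "M + 1 - l"] l that by auto
    qed
    then show ?thesis by linarith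
  qed
  have sumP: "(\<Sum>k\<in>{0..M}. ff p uu vv M u k x * ff p uu vv M u k y * Delta p uu vv M k)
      = (\<Sum>k\<le>M. P x k * P y k / \<beta> k)" for x y
    unfolding atLeast0AtMost
    by (rule sum.cong[OF refl]) (simp add: ffD[OF Xne] ppP \<beta>_def g_def)
  define A where "A = (\<Prod>l\<in>{1..M}. aa p uu vv M (int l))"
  have Apos: "A > 0" unfolding A_def by (intro prod_pos apos(1)) auto
  define Q where "Q = pp p (uu \<circ> perm4 2) (vv \<circ> perm4 2) M u M (E j)"
  have Q: "Q = cont (\<lambda>i. E j - b (Suc i)) (\<lambda>i. g (Suc i)) M"
    unfolding Q_def ppt_cont[OF hp hu] b_def g_def ..
  have dod: "P (E j) M * Q = \<beta> M"
  proof (cases "M = 0")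
    case True then show ?thesis unfolding Q P_def \<beta>_def by simp
  next
    case False
    then have "M \<ge> 1" by simp
    from cont_dodgson[OF this, of "\<lambda>i. E j - b i" g] roots[OF hj]
    show ?thesis unfolding Q P_def \<beta>_def by simp
  qed
  have Qne: "Q \<noteq> 0" using dod bpos[of M] by auto
  define Pr where "Pr = (\<Prod>l\<in>{0..M} - {j}. E j - E l)"
  have norm: "(\<Sum>k\<le>M. P (E j) k * P (E j) k / \<beta> k) = Pr / Q"
  proof -
    have "(\<Sum>k\<le>M. P (E j) k * P (E j) k / \<beta> k) = P (E j) M / \<beta> M * Pr"
      unfolding P_def \<beta>_def Pr_def by (rule cont_norm[OF inj _ gne hj]) (use roots in \<open>simp add: P_def\<close>)
    also have "P (E j) M / \<beta> M = 1 / Q" using dod Qne bpos[of M] by (auto simp: field_simps)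
    finally show ?thesis by simp
  qed
  have Spos: "(\<Sum>k\<le>M. P (E j) k * P (E j) k / \<beta> k) \<ge> 1"
  proof -
    have "P (E j) 0 * P (E j) 0 / \<beta> 0 \<le> (\<Sum>k\<le>M. P (E j) k * P (E j) k / \<beta> k)"
      by (rule member_le_sum) (auto intro!: divide_nonneg_pos bpos)
    then show ?thesis by (simp add: P_def \<beta>_def)
  qed
  define N where "N = 1 / (\<bar>Q / A\<bar> * A) * (\<Prod>l\<in>{0..M} - {j}. \<bar>E j - E l\<bar>)"
  have NPr: "N = \<bar>Pr\<bar> / \<bar>Q\<bar>"
    unfolding N_def Pr_def abs_prod using Apos by simp
  have part1: "(\<Sum>k\<in>{0..M}. ff p uu vv M u k (E i) * ff p uu vv M u k (E j) * Delta p uu vv M k)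
           = (if i = j then N else 0)"
  proof (cases "i = j")
    case True
    have "Pr / Q > 0" using norm Spos by simp
    then have "Pr / Q = \<bar>Pr\<bar> / \<bar>Q\<bar>" by (metis abs_divide abs_of_pos)
    then show ?thesis using True sumP norm NPr by simp
  next
    case False
    have Eij: "E i \<noteq> E j" using False inj hi hj by (auto dest: inj_onD)
    have "(E i - E j) * (\<Sum>k\<le>M. P (E i) k * P (E j) k / \<beta> k) = 0"
      unfolding P_def \<beta>_def using cont_CD[where n=M and b=b and g=g and x="E i" and y="E j", OF gne] roots[OF hi] roots[OF hj]
      by (simp add: P_def)
    then show ?thesis using False sumP Eij by simp
  qed
  have part2: "N = 1 / \<bar>Q / A\<bar> *
              (\<Prod>k\<in>{1..M}. \<Prod>r\<in>{1..4}.
                 br p (alph uu M) r (uu 1 + real k) * br p (alph uu M) r (uu 1 - 1/2 + real k)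
                 / (br p (alph uu M) r (uu 1 - uu r + real k)
                    * br p (alph uu M) r (uu 1 - vv r - 1/2 + real k))) * (\<Prod>l\<in>{0..M} - {j}. \<bar>E j - E l\<bar>)"
  proof -
    have "(\<Prod>k\<in>{1..M}. \<Prod>r\<in>{1..4}.
                 br p (alph uu M) r (uu 1 + real k) * br p (alph uu M) r (uu 1 - 1/2 + real k)
                 / (br p (alph uu M) r (uu 1 - uu r + real k)
                    * br p (alph uu M) r (uu 1 - vv r - 1/2 + real k)))
        = (\<Prod>k\<in>{1..M}. inverse (aa p uu vv M (int k)))"
    proof (rule prod.cong[OF refl])
      fix k
      show "(\<Prod>r\<in>{1..4}.
                 br p (alph uu M) r (uu 1 + real k) * br p (alph uu M) r (uu 1 - 1/2 + real k)
                 / (br p (alph uu M) r (uu 1 - uu r + real k)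
                    * br p (alph uu M) r (uu 1 - vv r - 1/2 + real k))) = inverse (aa p uu vv M (int k))"
        unfolding aa_def Let_def prod_inversef[symmetric] o_def
        by (rule prod.cong[OF refl]) simp
    qed
    also have "\<dots> = inverse A" unfolding A_def prod_inversef[symmetric] o_def ..
    finally have PP: "(\<Prod>k\<in>{1..M}. \<Prod>r\<in>{1..4}.
                 br p (alph uu M) r (uu 1 + real k) * br p (alph uu M) r (uu 1 - 1/2 + real k)
                 / (br p (alph uu M) r (uu 1 - uu r + real k)
                    * br p (alph uu M) r (uu 1 - vv r - 1/2 + real k))) = inverse A" .
    have e: "1 / (\<bar>Q / A\<bar> * A) = 1 / \<bar>Q / A\<bar> * inverse A"
      by (simp only: divide_inverse inverse_mult_distrib mult_1_left)
    show ?thesis unfolding N_def e PP ..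
  qed
  show ?thesis
    unfolding Let_def Q_def[symmetric] A_def[symmetric] N_def[symmetric]
    using part1 part2 by blast
qed

end
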